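(* Let $(\mathbf{w},\mathbf{u},q)$ be a sufficiently smooth solution of the GePUP-E formulation (described in the context) on $\Omega\times[t_0,\infty)$. Then $$\frac{\partial(\nabla\cdot\mathbf{w})}{\partial t}=\nu\Delta(\nabla\cdot\mathbf{w})\quad\text{in }\Omega,$$ which implies $$\frac{\mathrm{d}}{\mathrm{d}t}\|\nabla\cdot\mathbf{w}\|^2=-2\nu\|\nabla(\nabla\cdot\mathbf{w})\|^2,$$ which further implies $$\|\nabla\cdot\mathbf{w}(t)\|\le e^{-\nu C(t-t_0)}\|\nabla\cdot\mathbf{w}(t_0)\|,$$ where $C$ is a positive constant independent of $\mathbf{w}$.
   Context: $\|\cdot\|$ denotes the $L^2(\Omega)$ norm. $\Omega\subset\mathbb{R}^D$ is a bounded connected open set with sufficiently smooth boundary, unit outward normal $\mathbf{n}$ and unit tangent vector(s) $\boldsymbol{\tau}$ on $\partial\Omega$. $\nu>0$ is the kinematic viscosity, $\mathbf{g}$ a given body force, $\lambda\ge 0$ a penalty parameter. The Leray–Helmholtz projection $\mathscr{P}$ maps a $C^1$ vector field $\mathbf{v}^*$ to $\mathbf{v}^*-\nabla\phi$ where $\Delta\phi=\nabla\cdot\mathbf{v}^*$ in $\Omega$ and $\mathbf{n}\cdot\nabla\phi=\mathbf{n}\cdot\mathbf{v}^*$ on $\partial\Omega$. The GePUP-E formulation is the system for $(\mathbf{w},\mathbf{u},q)$: $\partial_t\mathbf{w}=\mathbf{g}-\mathbf{u}\cdot\nabla\mathbf{u}-\nabla q+\nu\Delta\mathbf{w}$ in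 $\Omega$; $\mathbf{w}\cdot\boldsymbol{\tau}=0$ and $\nabla\cdot\mathbf{w}=0$ on $\partial\Omega$; $\mathbf{u}=\mathscr{P}\mathbf{w}$ in $\Omega$, $\mathbf{u}\cdot\mathbf{n}=0$ on $\partial\Omega$; $\Delta q=\nabla\cdot(\mathbf{g}-\mathbf{u}\cdot\nabla\mathbf{u})$ in $\Omega$; $\mathbf{n}\cdot\nabla q=\mathbf{n}\cdot(\mathbf{g}-\mathbf{u}\cdot\nabla\mathbf{u}+\nu\Delta\mathbf{w})+\lambda\,\mathbf{n}\cdot\mathbf{w}$ on $\partial\Omega$; with initial condition $\mathbf{w}(\mathbf{x},t_0)=\mathbf{u}(\mathbf{x},t_0)$ for all $\mathbf{x}\in\overline{\Omega}$. *)

theory Defs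
  imports "HOL-Analysis.Analysis"
begin

definition partial_dir :: "'a::euclidean_space \<Rightarrow> ('a \<Rightarrow> 'b::real_normed_vector) \<Rightarrow> 'a \<Rightarrow> 'b" where
  "partial_dir b f x = frechet_derivative f (at x) b"

fun iter_partial :: "'a::euclidean_space list \<Rightarrow> ('a \<Rightarrow> 'b::real_normed_vector) \<Rightarrow> 'a \<Rightarrow> 'b" where
  "iter_partial [] f = f"
| "iter_partial (b # bs) f = partial_dir b (iter_partial bs f)"

definition Ck_on :: "nat \<Rightarrow> 'a::euclidean_space set \<Rightarrow> ('a \<Rightarrow> 'b::real_normed_vector) \<Rightarrow> bool" where
  "Ck_on k S f \<longleftrightarrow>
     (\<forall>bs. set bs \<subseteq> Basis \<and> length bs < k \<longrightarrow> (\<forall>x\<in>S. iter_partial bs f differentiable (at x))) \<and>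
     (\<forall>bs. set bs \<subseteq> Basis \<and> length bs \<le> k \<longrightarrow> continuous_on S (iter_partial bs f))"

definition Cinf_on :: "'a::euclidean_space set \<Rightarrow> ('a \<Rightarrow> 'b::real_normed_vector) \<Rightarrow> bool" where
  "Cinf_on S f \<longleftrightarrow> (\<forall>k. Ck_on k S f)"

definition grad :: "('a::euclidean_space \<Rightarrow> real) \<Rightarrow> 'a \<Rightarrow> 'a" where
  "grad f x = (\<Sum>b\<in>Basis. partial_dir b f x *\<^sub>R b)"

definition divg :: "('a::euclidean_space \<Rightarrow> 'a) \<Rightarrow> 'a \<Rightarrow> real" where
  "divg F x = (\<Sum>b\<in>Basis. partial_dir b F x \<bullet> b)"

definition lap :: "('a::euclidean_space \<Rightarrow> real) \<Rightarrow> 'a \<Rightarrow> real" where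
  "lap f x = (\<Sum>b\<in>Basis. partial_dir b (partial_dir b f) x)"

definition vlap :: "('a::euclidean_space \<Rightarrow> 'a) \<Rightarrow> 'a \<Rightarrow> 'a" where
  "vlap F x = (\<Sum>b\<in>Basis. lap (\<lambda>y. F y \<bullet> b) x *\<^sub>R b)"

definition conv :: "('a::euclidean_space \<Rightarrow> 'a) \<Rightarrow> ('a \<Rightarrow> 'a) \<Rightarrow> 'a \<Rightarrow> 'a" where
  "conv u v x = (\<Sum>b\<in>Basis. (u x \<bullet> b) *\<^sub>R partial_dir b v x)"

definition L2norm :: "'a::euclidean_space set \<Rightarrow> ('a \<Rightarrow> 'b::real_normed_vector) \<Rightarrow> real" where
  "L2norm \<Omega> f = sqrt (integral \<Omega> (\<lambda>x. (norm (f x))\<^sup>2))"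

text \<open>Outward unit normal of \<Omega> = {x. \<rho> x < 0} given by a defining function \<rho>.\<close>
definition normal_of :: "('a::euclidean_space \<Rightarrow> real) \<Rightarrow> 'a \<Rightarrow> 'a" where
  "normal_of \<rho> x = (1 / norm (grad \<rho> x)) *\<^sub>R grad \<rho> x"

definition is_leray_proj :: "'a::euclidean_space set \<Rightarrow> ('a \<Rightarrow> 'a) \<Rightarrow> ('a \<Rightarrow> 'a) \<Rightarrow> ('a \<Rightarrow> 'a) \<Rightarrow> bool" where
  "is_leray_proj \<Omega> n v pv \<longleftrightarrow>
     (\<exists>\<phi> U. open U \<and> closure \<Omega> \<subseteq> U \<and> Ck_on 2 U \<phi> \<and>
        (\<forall>x\<in>\<Omega>. lap \<phi> x = divg v x) \<and>
        (\<forall>x\<in>frontier \<Omega>. n x \<bullet> grad \<phi> x = n x \<bullet> v x) \<and>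
        (\<forall>x\<in>\<Omega>. pv x = v x - grad \<phi> x))"

definition GePUP_E_solution ::
  "'a::euclidean_space set \<Rightarrow> ('a \<Rightarrow> 'a) \<Rightarrow> real \<Rightarrow> real \<Rightarrow> ('a \<Rightarrow> real \<Rightarrow> 'a) \<Rightarrow>
   ('a \<Rightarrow> real \<Rightarrow> 'a) \<Rightarrow> ('a \<Rightarrow> real \<Rightarrow> 'a) \<Rightarrow> ('a \<Rightarrow> real \<Rightarrow> real) \<Rightarrow> real \<Rightarrow> bool" where
  "GePUP_E_solution \<Omega> n \<nu> lam g w u q t0 \<longleftrightarrow>
     \<comment> \<open>sufficient smoothness: C^\<infinity> in space-time on an open neighbourhood of closure \<Omega> \<times> [t0,\<infinity>)\<close>
     (\<exists>V. open V \<and> closure \<Omega> \<times> {t0..} \<subseteq> V \<and>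
        Cinf_on V (\<lambda>p. w (fst p) (snd p)) \<and> Cinf_on V (\<lambda>p. u (fst p) (snd p)) \<and>
        Cinf_on V (\<lambda>p. q (fst p) (snd p)) \<and> Cinf_on V (\<lambda>p. g (fst p) (snd p))) \<and>
     \<comment> \<open>momentum equation for w\<close>
     (\<forall>t\<ge>t0. \<forall>x\<in>\<Omega>. vector_derivative (\<lambda>s. w x s) (at t) =
        g x t - conv (\<lambda>y. u y t) (\<lambda>y. u y t) x - grad (\<lambda>y. q y t) x + \<nu> *\<^sub>R vlap (\<lambda>y. w y t) x) \<and>
     \<comment> \<open>w . \<tau> = 0 for every tangent vector \<tau>, and div w = 0 on the boundary\<close>
     (\<forall>t\<ge>t0. \<forall>x\<in>frontier \<Omega>. (\<forall>\<tau>. \<tau> \<bullet> n x = 0 \<longrightarrow> w x t \<bullet> \<tau> = 0) \<and> divg (\<lambda>y. w y t) x = 0) \<and>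
     \<comment> \<open>u = P w in \<Omega>, u . n = 0 on the boundary\<close>
     (\<forall>t\<ge>t0. is_leray_proj \<Omega> n (\<lambda>y. w y t) (\<lambda>y. u y t)) \<and>
     (\<forall>t\<ge>t0. \<forall>x\<in>frontier \<Omega>. u x t \<bullet> n x = 0) \<and>
     \<comment> \<open>pressure Poisson equation\<close>
     (\<forall>t\<ge>t0. \<forall>x\<in>\<Omega>. lap (\<lambda>y. q y t) x =
        divg (\<lambda>y. g y t - conv (\<lambda>z. u z t) (\<lambda>z. u z t) y) x) \<and>
     \<comment> \<open>pressure Neumann boundary condition\<close>
     (\<forall>t\<ge>t0. \<forall>x\<in>frontier \<Omega>. n x \<bullet> grad (\<lambda>y. q y t) x =
        n x \<bullet> (g x t - conv (\<lambda>y. u y t) (\<lambda>y. u y t) x + \<nu> *\<^sub>R vlap (\<lambda>y. w y t) x) + lam * (n x \<bullet> w x t)) \<and>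
     \<comment> \<open>initial condition\<close>
     (\<forall>x\<in>closure \<Omega>. w x t0 = u x t0)"

end

theory Submission
  imports Defs
begin

lemma partial_local:
  assumes "open S" "x \<in> S" "\<And>y. y \<in> S \<Longrightarrow> f y = g y"
  shows "partial_dir b f x = partial_dir b g x"
proof -
  have "\<And>D. (f has_derivative D) (at x) \<longleftrightarrow> (g has_derivative D) (at x)"
    using assms has_derivative_transform_within_open[of f _ x UNIV S g]
      has_derivative_transform_within_open[of g _ x UNIV S f] by auto
  then show ?thesis unfolding partial_dir_def frechet_derivative_def by simp
qed

lemma differentiable_local:
  assumes "f differentiable at x" "open S" "x \<in> S" "\<And>y. y \<in> S \<Longrightarrow> f y = g y"
  shows "g differentiable at x"
  using assms has_derivative_transform_within_open unfolding differentiable_def by blast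

lemma partial_dir_has: "f differentiable at x \<Longrightarrow> (f has_derivative frechet_derivative f (at x)) (at x)"
  using frechet_derivative_works by blast

lemma partial_add:
  assumes "f differentiable at x" "g differentiable at x"
  shows "partial_dir b (\<lambda>y. f y + g y) x = partial_dir b f x + partial_dir b g x"
proof -
  have "((\<lambda>y. f y + g y) has_derivative (\<lambda>h. frechet_derivative f (at x) h + frechet_derivative g (at x) h)) (at x)"
    by (intro has_derivative_add partial_dir_has assms)
  from frechet_derivative_at[OF this] show ?thesis unfolding partial_dir_def by metis
qed

lemma partial_diff:
  assumes "f differentiable at x" "g differentiable at x"
  shows "partial_dir b (\<lambda>y. f y - g y) x = partial_dir b f x - partial_dir b g x"
proof -
  have "((\<lambda>y. f y - g y) has_derivative (\<lambda>h. frechet_derivative f (at x) h - frechet_derivative g (at x) h)) (at x)"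
    by (intro has_derivative_diff partial_dir_has assms)
  from frechet_derivative_at[OF this] show ?thesis unfolding partial_dir_def by metis
qed

lemma partial_scaleR:
  assumes "f differentiable at x"
  shows "partial_dir b (\<lambda>y. c *\<^sub>R f y) x = c *\<^sub>R partial_dir b f x"
proof -
  have "((\<lambda>y. c *\<^sub>R f y) has_derivative (\<lambda>h. c *\<^sub>R frechet_derivative f (at x) h)) (at x)"
    by (intro has_derivative_scaleR_right partial_dir_has assms)
  from frechet_derivative_at[OF this] show ?thesis unfolding partial_dir_def by metis
qed

lemma partial_scaleR_left:
  assumes "f differentiable at x"
  shows "partial_dir b (\<lambda>y. f y *\<^sub>R c) x = partial_dir b f x *\<^sub>R c"
proof -
  have "((\<lambda>y. f y *\<^sub>R c) has_derivative (\<lambda>h. frechet_derivative f (at x) h *\<^sub>R c)) (at x)"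
    by (intro has_derivative_scaleR_left partial_dir_has assms)
  from frechet_derivative_at[OF this] show ?thesis unfolding partial_dir_def by metis
qed

lemma partial_inner:
  assumes "f differentiable at x"
  shows "partial_dir b (\<lambda>y. f y \<bullet> c) x = partial_dir b f x \<bullet> c"
proof -
  have "((\<lambda>y. f y \<bullet> c) has_derivative (\<lambda>h. frechet_derivative f (at x) h \<bullet> c)) (at x)"
    by (intro has_derivative_inner_left partial_dir_has assms)
  from frechet_derivative_at[OF this] show ?thesis unfolding partial_dir_def by metis
qed

lemma partial_sum:
  assumes "finite I" "\<And>i. i \<in> I \<Longrightarrow> f i differentiable at x"
  shows "partial_dir b (\<lambda>y. \<Sum>i\<in>I. f i y) x = (\<Sum>i\<in>I. partial_dir b (f i) x)"
proof -
  have "((\<lambda>y. \<Sum>i\<in>I. f i y) has_derivative (\<lambda>h. \<Sum>i\<in>I. frechet_derivative (f i) (at x) h)) (at x)"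
    by (intro has_derivative_sum partial_dir_has assms)
  from frechet_derivative_at[OF this] show ?thesis unfolding partial_dir_def by metis
qed

lemma line_deriv:
  fixes F :: "'a::euclidean_space \<Rightarrow> 'b::real_normed_vector"
  assumes "F differentiable at (p + r *\<^sub>R e)"
  shows "((\<lambda>r. F (p + r *\<^sub>R e)) has_vector_derivative partial_dir e F (p + r *\<^sub>R e)) (at r)"
proof -
  have l: "((\<lambda>r. p + r *\<^sub>R e) has_derivative (\<lambda>h. h *\<^sub>R e)) (at r)"
    by (auto intro!: derivative_eq_intros)
  have "((\<lambda>r. F (p + r *\<^sub>R e)) has_derivative (\<lambda>h. frechet_derivative F (at (p + r *\<^sub>R e)) (h *\<^sub>R e))) (at r)"
    using has_derivative_compose[OF l partial_dir_has[OF assms]] by (simp add: o_def)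
  moreover have "linear (frechet_derivative F (at (p + r *\<^sub>R e)))"
    using partial_dir_has[OF assms] has_derivative_linear by blast
  ultimately show ?thesis unfolding has_vector_derivative_def partial_dir_def
    by (simp add: linear_scale)
qed

lemma line_deriv_real:
  fixes F :: "'a::euclidean_space \<Rightarrow> real"
  assumes "F differentiable at (p + r *\<^sub>R e)"
  shows "((\<lambda>r. F (p + r *\<^sub>R e)) has_real_derivative partial_dir e F (p + r *\<^sub>R e)) (at r)"
  using line_deriv[OF assms] by (simp add: has_real_derivative_iff_has_vector_derivative)

lemma slice_has:
  fixes F :: "'a::euclidean_space \<times> real \<Rightarrow> 'b::real_normed_vector"
  assumes "F differentiable at (x,t)"
  shows "((\<lambda>y. F (y,t)) has_derivative (\<lambda>h. frechet_derivative F (at (x,t)) (h,0))) (at x)"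
proof -
  have l: "((\<lambda>y. (y,t)) has_derivative (\<lambda>h. (h,0))) (at x)"
    by (auto intro!: derivative_eq_intros)
  show ?thesis using has_derivative_compose[OF l partial_dir_has[OF assms]] by (simp add: o_def)
qed

lemma slice_partial:
  fixes F :: "'a::euclidean_space \<times> real \<Rightarrow> 'b::real_normed_vector"
  assumes "F differentiable at (x,t)"
  shows "partial_dir b (\<lambda>y. F (y,t)) x = partial_dir (b,0) F (x,t)"
  using frechet_derivative_at[OF slice_has[OF assms]] unfolding partial_dir_def by metis

lemma slice_diff:
  fixes F :: "'a::euclidean_space \<times> real \<Rightarrow> 'b::real_normed_vector"
  assumes "F differentiable at (x,t)"
  shows "(\<lambda>y. F (y,t)) differentiable at x"
  using slice_has[OF assms] unfolding differentiable_def by blast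

definition sm :: "'a::euclidean_space set \<Rightarrow> ('a \<Rightarrow> 'b::real_normed_vector) \<Rightarrow> bool" where
  "sm V F \<longleftrightarrow> (\<forall>bs. set bs \<subseteq> Basis \<longrightarrow>
      (\<forall>p\<in>V. iter_partial bs F differentiable at p) \<and> continuous_on V (iter_partial bs F))"

lemma Cinf_sm: assumes "Cinf_on V F" shows "sm V F"
  unfolding sm_def
proof (intro allI impI)
  fix bs :: "'a list" assume bs: "set bs \<subseteq> Basis"
  have "Ck_on (Suc (length bs)) V F" using assms unfolding Cinf_on_def by blast
  then show "(\<forall>p\<in>V. iter_partial bs F differentiable at p) \<and> continuous_on V (iter_partial bs F)"
    unfolding Ck_on_def using bs by simp
qed

lemma iter_partial_append: "iter_partial (bs @ [e]) F = iter_partial bs (partial_dir e F)"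
  by (induction bs) simp_all

lemma sm_partial: assumes "sm V F" "e \<in> Basis" shows "sm V (partial_dir e F)"
  unfolding sm_def
proof (intro allI impI)
  fix bs :: "'a list" assume bs: "set bs \<subseteq> Basis"
  then have be: "set (bs @ [e]) \<subseteq> Basis" using assms(2) by simp
  show "(\<forall>p\<in>V. iter_partial bs (partial_dir e F) differentiable at p) \<and> continuous_on V (iter_partial bs (partial_dir e F))"
    using assms(1)[unfolded sm_def, rule_format, OF be] unfolding iter_partial_append .
qed

lemma sm_diff: "sm V F \<Longrightarrow> p \<in> V \<Longrightarrow> F differentiable at p"
  unfolding sm_def by (drule spec[of _ "[]"]) simp

lemma sm_cont: "sm V F \<Longrightarrow> continuous_on V F"
  unfolding sm_def by (drule spec[of _ "[]"]) simp


lemma iter_local: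
  assumes "open V" "\<And>p. p \<in> V \<Longrightarrow> F p = G p"
  shows "p \<in> V \<Longrightarrow> iter_partial bs F p = iter_partial bs G p"
proof (induction bs arbitrary: p)
  case Nil then show ?case using assms by simp
next
  case (Cons b bs)
  show ?case unfolding iter_partial.simps
  proof (rule partial_local[OF assms(1) Cons.prems])
    fix y assume "y \<in> V" then show "iter_partial bs F y = iter_partial bs G y" by (rule Cons.IH)
  qed
qed

lemma sm_cong:
  assumes "open V" "\<And>p. p \<in> V \<Longrightarrow> F p = G p" "sm V F"
  shows "sm V G"
  unfolding sm_def
proof (intro allI impI conjI ballI)
  fix bs :: "'a list" assume bs: "set bs \<subseteq> Basis"
  have e: "\<And>q. q \<in> V \<Longrightarrow> iter_partial bs F q = iter_partial bs G q" using iter_local[OF assms(1,2)] .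
  have F: "(\<forall>p\<in>V. iter_partial bs F differentiable at p) \<and> continuous_on V (iter_partial bs F)"
    using assms(3)[unfolded sm_def, rule_format, OF bs] .
  {
    fix p assume p: "p \<in> V"
    show "iter_partial bs G differentiable at p"
      using differentiable_local[where f="iter_partial bs F" and g="iter_partial bs G", OF _ assms(1) p e] F p by blast
  }
  show "continuous_on V (iter_partial bs G)"
    using continuous_on_cong[where f="iter_partial bs F" and g="iter_partial bs G", OF refl e] F by blast
qed

lemma sm_sum:
  assumes "open V" "finite I" "\<And>i. i \<in> I \<Longrightarrow> sm V (F i)"
  shows "sm V (\<lambda>p. \<Sum>i\<in>I. F i p)"
proof -
  have Fi: "\<And>i. i \<in> I \<Longrightarrow> (\<forall>p\<in>V. iter_partial bs (F i) differentiable at p) \<and> continuous_on V (iter_partial bs (F i))"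
    if "set bs \<subseteq> Basis" for bs using assms(3)[unfolded sm_def] that by blast
  have eq: "\<And>p. p \<in> V \<Longrightarrow> iter_partial bs (\<lambda>p. \<Sum>i\<in>I. F i p) p = (\<Sum>i\<in>I. iter_partial bs (F i) p)"
    if "set bs \<subseteq> Basis" for bs using that
  proof (induction bs)
    case Nil then show ?case by simp
  next
    case (Cons b bs)
    have bs: "set bs \<subseteq> Basis" using Cons.prems by simp
    have P: "p \<in> V" using Cons.prems by simp
    have "iter_partial (b # bs) (\<lambda>p. \<Sum>i\<in>I. F i p) p
          = partial_dir b (\<lambda>p. \<Sum>i\<in>I. iter_partial bs (F i) p) p"
      unfolding iter_partial.simps
    proof (rule partial_local[OF assms(1) P])
      fix y assume "y \<in> V" then show "iter_partial bs (\<lambda>p. \<Sum>i\<in>I. F i p) y = (\<Sum>i\<in>I. iter_partial bs (F i) y)"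
        using Cons.IH[OF _ bs] by blast
    qed
    also have "\<dots> = (\<Sum>i\<in>I. iter_partial (b#bs) (F i) p)"
      unfolding iter_partial.simps
      by (rule partial_sum[OF assms(2)]) (use Fi[OF bs] P in blast)
    finally show ?case .
  qed
  show ?thesis unfolding sm_def
  proof (intro allI impI conjI ballI)
    fix bs :: "'a list" assume bs: "set bs \<subseteq> Basis"
    {
      fix p assume p: "p \<in> V"
      have "(\<lambda>p. \<Sum>i\<in>I. iter_partial bs (F i) p) differentiable at p"
        using Fi[OF bs] p by (intro differentiable_sum assms(2)) blast
      then show "iter_partial bs (\<lambda>p. \<Sum>i\<in>I. F i p) differentiable at p"
        using differentiable_local[OF _ assms(1) p, of "(\<lambda>p. \<Sum>i\<in>I. iter_partial bs (F i) p)"] eq[OF bs] by metis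
    }
    have "continuous_on V (\<lambda>p. \<Sum>i\<in>I. iter_partial bs (F i) p)"
      using Fi[OF bs] by (intro continuous_on_sum) blast
    then show "continuous_on V (iter_partial bs (\<lambda>p. \<Sum>i\<in>I. F i p))"
      using continuous_on_cong[OF refl, of V "iter_partial bs (\<lambda>p. \<Sum>i\<in>I. F i p)" "(\<lambda>p. \<Sum>i\<in>I. iter_partial bs (F i) p)"] eq[OF bs] by metis
  qed
qed

lemma sm_inner:
  assumes "open V" "sm V F"
  shows "sm V (\<lambda>p. F p \<bullet> c)"
proof -
  have Fi: "(\<forall>p\<in>V. iter_partial bs F differentiable at p) \<and> continuous_on V (iter_partial bs F)"
    if "set bs \<subseteq> Basis" for bs using assms(2)[unfolded sm_def] that by blast
  have eq: "\<And>p. p \<in> V \<Longrightarrow> iter_partial bs (\<lambda>p. F p \<bullet> c) p = iter_partial bs F p \<bullet> c"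
    if "set bs \<subseteq> Basis" for bs using that
  proof (induction bs)
    case Nil then show ?case by simp
  next
    case (Cons b bs)
    have bs: "set bs \<subseteq> Basis" using Cons.prems by simp
    have P: "p \<in> V" using Cons.prems by simp
    have "iter_partial (b # bs) (\<lambda>p. F p \<bullet> c) p
          = partial_dir b (\<lambda>p. iter_partial bs F p \<bullet> c) p"
      unfolding iter_partial.simps
    proof (rule partial_local[OF assms(1) P])
      fix y assume "y \<in> V" then show "iter_partial bs (\<lambda>p. F p \<bullet> c) y = iter_partial bs F y \<bullet> c"
        using Cons.IH[OF _ bs] by blast
    qed
    also have "\<dots> = iter_partial (b#bs) F p \<bullet> c"
      unfolding iter_partial.simps
      by (rule partial_inner) (use Fi[OF bs] P in blast)
    finally show ?case .
  qed
  show ?thesis unfolding sm_def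
  proof (intro allI impI conjI ballI)
    fix bs :: "'a list" assume bs: "set bs \<subseteq> Basis"
    {
      fix p assume p: "p \<in> V"
      have "(\<lambda>p. iter_partial bs F p \<bullet> c) differentiable at p"
        using has_derivative_inner_left[OF partial_dir_has, of "iter_partial bs F" p c] Fi[OF bs] p
        unfolding differentiable_def by blast
      then show "iter_partial bs (\<lambda>p. F p \<bullet> c) differentiable at p"
        using differentiable_local[OF _ assms(1) p, of "(\<lambda>p. iter_partial bs F p \<bullet> c)"] eq[OF bs] by metis
    }
    have "continuous_on V (\<lambda>p. iter_partial bs F p \<bullet> c)"
      using Fi[OF bs] by (intro continuous_intros) blast
    then show "continuous_on V (iter_partial bs (\<lambda>p. F p \<bullet> c))"
      using continuous_on_cong[OF refl, of V "iter_partial bs (\<lambda>p. F p \<bullet> c)" "(\<lambda>p. iter_partial bs F p \<bullet> c)"] eq[OF bs] by metis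
  qed
qed

lemma mixed_mvt:
  fixes F :: "'n::euclidean_space \<Rightarrow> real"
  assumes h: "h > 0"
    and reg: "\<And>s r. 0 \<le> s \<Longrightarrow> s \<le> h \<Longrightarrow> 0 \<le> r \<Longrightarrow> r \<le> h \<Longrightarrow> p + s *\<^sub>R e + r *\<^sub>R f \<in> V"
    and dF: "\<And>q. q \<in> V \<Longrightarrow> F differentiable at q"
    and dFe: "\<And>q. q \<in> V \<Longrightarrow> partial_dir e F differentiable at q"
  shows "\<exists>s r. 0 < s \<and> s < h \<and> 0 < r \<and> r < h \<and>
     F (p + h *\<^sub>R e + h *\<^sub>R f) - F (p + h *\<^sub>R e) - F (p + h *\<^sub>R f) + F p
       = h * h * partial_dir f (partial_dir e F) (p + s *\<^sub>R e + r *\<^sub>R f)"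
proof -
  define \<phi> where "\<phi> s = F ((p + h *\<^sub>R f) + s *\<^sub>R e) - F (p + s *\<^sub>R e)" for s
  have "DERIV \<phi> s :> partial_dir e F ((p + h *\<^sub>R f) + s *\<^sub>R e) - partial_dir e F (p + s *\<^sub>R e)"
    if "0 \<le> s" "s \<le> h" for s
  proof -
    have "(p + h *\<^sub>R f) + s *\<^sub>R e \<in> V" using reg[OF that, of h] h by (simp add: algebra_simps)
    moreover have "p + s *\<^sub>R e \<in> V" using reg[OF that, of 0] h by simp
    ultimately show ?thesis unfolding \<phi>_def
      by (intro DERIV_diff line_deriv_real dF)
  qed
  from MVT2[OF h this] obtain s where s: "0 < s" "s < h"
    and s_eq: "\<phi> h - \<phi> 0 = (h - 0) * (partial_dir e F ((p + h *\<^sub>R f) + s *\<^sub>R e) - partial_dir e F (p + s *\<^sub>R e))"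
    by blast
  define \<psi> where "\<psi> r = partial_dir e F ((p + s *\<^sub>R e) + r *\<^sub>R f)" for r
  have "DERIV \<psi> r :> partial_dir f (partial_dir e F) ((p + s *\<^sub>R e) + r *\<^sub>R f)"
    if "0 \<le> r" "r \<le> h" for r
    unfolding \<psi>_def using reg[of s r] s that by (intro line_deriv_real dFe) simp
  from MVT2[OF h this] obtain r where r: "0 < r" "r < h"
    and r_eq: "\<psi> h - \<psi> 0 = (h - 0) * partial_dir f (partial_dir e F) ((p + s *\<^sub>R e) + r *\<^sub>R f)"
    by blast
  have "F (p + h *\<^sub>R e + h *\<^sub>R f) - F (p + h *\<^sub>R e) - F (p + h *\<^sub>R f) + F p = \<phi> h - \<phi> 0"
    unfolding \<phi>_def by (simp add: algebra_simps)
  also have "\<dots> = h * (\<psi> h - \<psi> 0)"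
    using s_eq unfolding \<psi>_def by (simp add: algebra_simps)
  also have "\<dots> = h * h * partial_dir f (partial_dir e F) (p + s *\<^sub>R e + r *\<^sub>R f)"
    using r_eq by simp
  finally show ?thesis using s r by blast
qed

lemma clairaut:
  fixes F :: "'n::euclidean_space \<Rightarrow> real"
  assumes V: "open V" and p: "p \<in> V" and e: "e \<in> Basis" and f: "f \<in> Basis"
    and dF: "\<And>q. q \<in> V \<Longrightarrow> F differentiable at q"
    and dFe: "\<And>q. q \<in> V \<Longrightarrow> partial_dir e F differentiable at q"
    and dFf: "\<And>q. q \<in> V \<Longrightarrow> partial_dir f F differentiable at q"
    and cA: "continuous_on V (partial_dir f (partial_dir e F))"
    and cB: "continuous_on V (partial_dir e (partial_dir f F))"
  shows "partial_dir f (partial_dir e F) p = partial_dir e (partial_dir f F) p"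
proof (rule ccontr)
  define A where "A = partial_dir f (partial_dir e F)"
  define B where "B = partial_dir e (partial_dir f F)"
  assume "partial_dir f (partial_dir e F) p \<noteq> partial_dir e (partial_dir f F) p"
  then have d: "\<bar>A p - B p\<bar> > 0" unfolding A_def B_def by simp
  define \<epsilon> where "\<epsilon> = \<bar>A p - B p\<bar> / 2"
  have \<epsilon>: "\<epsilon> > 0" using d unfolding \<epsilon>_def by simp
  obtain d1 where d1: "d1 > 0" "\<And>q. q \<in> V \<Longrightarrow> dist q p < d1 \<Longrightarrow> dist (A q) (A p) < \<epsilon>"
    using cA p \<epsilon> unfolding continuous_on_iff A_def by blast
  obtain d2 where d2: "d2 > 0" "\<And>q. q \<in> V \<Longrightarrow> dist q p < d2 \<Longrightarrow> dist (B q) (B p) < \<epsilon>"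
    using cB p \<epsilon> unfolding continuous_on_iff B_def by blast
  obtain d3 where d3: "d3 > 0" "ball p d3 \<subseteq> V"
    using V p open_contains_ball by blast
  define \<delta> where "\<delta> = min d1 (min d2 d3)"
  have \<delta>: "\<delta> > 0" using d1 d2 d3 unfolding \<delta>_def by simp
  define h where "h = \<delta> / 3"
  have h: "h > 0" using \<delta> unfolding h_def by simp
  have near: "dist (p + s *\<^sub>R u + r *\<^sub>R v) p < \<delta>"
    if "0 \<le> s" "s \<le> h" "0 \<le> r" "r \<le> h" "u \<in> Basis" "v \<in> Basis" for s r u v
  proof -
    have "dist (p + s *\<^sub>R u + r *\<^sub>R v) p = norm (s *\<^sub>R u + r *\<^sub>R v)"
      by (simp add: dist_norm)
    also have "\<dots> \<le> norm (s *\<^sub>R u) + norm (r *\<^sub>R v)" by (rule norm_triangle_ineq)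
    also have "\<dots> = s + r" using that by simp
    also have "\<dots> < \<delta>" using that \<delta> unfolding h_def by simp
    finally show ?thesis .
  qed
  have inV: "p + s *\<^sub>R u + r *\<^sub>R v \<in> V"
    if "0 \<le> s" "s \<le> h" "0 \<le> r" "r \<le> h" "u \<in> Basis" "v \<in> Basis" for s r u v
    using near[OF that] d3 unfolding \<delta>_def by (auto simp: dist_commute)
  obtain s1 r1 where sr1: "0 < s1" "s1 < h" "0 < r1" "r1 < h"
    "F (p + h *\<^sub>R e + h *\<^sub>R f) - F (p + h *\<^sub>R e) - F (p + h *\<^sub>R f) + F p
       = h * h * A (p + s1 *\<^sub>R e + r1 *\<^sub>R f)"
    using mixed_mvt[OF h inV[OF _ _ _ _ e f] dF dFe] unfolding A_def by blast
  obtain s2 r2 where sr2: "0 < s2" "s2 < h" "0 < r2" "r2 < h"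
    "F (p + h *\<^sub>R f + h *\<^sub>R e) - F (p + h *\<^sub>R f) - F (p + h *\<^sub>R e) + F p
       = h * h * B (p + s2 *\<^sub>R f + r2 *\<^sub>R e)"
    using mixed_mvt[OF h inV[OF _ _ _ _ f e] dF dFf] unfolding B_def by blast
  have eq: "p + h *\<^sub>R f + h *\<^sub>R e = p + h *\<^sub>R e + h *\<^sub>R f" by (simp add: algebra_simps)
  have "h * h * A (p + s1 *\<^sub>R e + r1 *\<^sub>R f) = h * h * B (p + s2 *\<^sub>R f + r2 *\<^sub>R e)"
    using sr1(5) sr2(5) unfolding eq by linarith
  then have AB: "A (p + s1 *\<^sub>R e + r1 *\<^sub>R f) = B (p + s2 *\<^sub>R f + r2 *\<^sub>R e)" using h by simp
  have "dist (A (p + s1 *\<^sub>R e + r1 *\<^sub>R f)) (A p) < \<epsilon>"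
    using d1(2)[OF inV[OF _ _ _ _ e f]] near[OF _ _ _ _ e f] sr1 unfolding \<delta>_def by fastforce
  moreover have "dist (B (p + s2 *\<^sub>R f + r2 *\<^sub>R e)) (B p) < \<epsilon>"
    using d2(2)[OF inV[OF _ _ _ _ f e]] near[OF _ _ _ _ f e] sr2 unfolding \<delta>_def by fastforce
  ultimately have "\<bar>A p - B p\<bar> < 2 * \<epsilon>" using AB by (simp add: dist_real_def)
  then show False unfolding \<epsilon>_def by simp
qed

lemma clairaut_sm:
  fixes F :: "'n::euclidean_space \<Rightarrow> real"
  assumes "open V" "sm V F" "p \<in> V" "e \<in> Basis" "f \<in> Basis"
  shows "partial_dir f (partial_dir e F) p = partial_dir e (partial_dir f F) p"
proof (rule clairaut[OF assms(1,3,4,5)])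
  show "\<And>q. q \<in> V \<Longrightarrow> F differentiable at q" using sm_diff[OF assms(2)] .
  show "\<And>q. q \<in> V \<Longrightarrow> partial_dir e F differentiable at q" using sm_diff[OF sm_partial[OF assms(2,4)]] .
  show "\<And>q. q \<in> V \<Longrightarrow> partial_dir f F differentiable at q" using sm_diff[OF sm_partial[OF assms(2,5)]] .
  show "continuous_on V (partial_dir f (partial_dir e F))" using sm_cont[OF sm_partial[OF sm_partial[OF assms(2,4)] assms(5)]] .
  show "continuous_on V (partial_dir e (partial_dir f F))" using sm_cont[OF sm_partial[OF sm_partial[OF assms(2,5)] assms(4)]] .
qed

lemma no_strict_max:
  fixes k k' :: "real \<Rightarrow> real"
  assumes d: "d > 0" and dk: "\<And>r. \<bar>r\<bar> < d \<Longrightarrow> DERIV k r :> k' r"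
    and dk': "DERIV k' 0 :> c" and mx: "\<And>r. \<bar>r\<bar> < d \<Longrightarrow> k r \<le> k 0"
  shows "c \<le> 0"
proof (rule ccontr)
  assume "\<not> c \<le> 0" then have c: "c > 0" by simp
  have k0: "k' 0 = 0"
    by (rule DERIV_local_max[OF dk[of 0] d]) (use d mx in auto)
  obtain d2 where d2: "d2 > 0" "\<And>h. h > 0 \<Longrightarrow> h < d2 \<Longrightarrow> k' 0 < k' (0 + h)"
    using DERIV_pos_inc_right[OF dk' c] by blast
  define h where "h = min d d2 / 2"
  have h: "h > 0" "h < d" "h < d2" using d d2 unfolding h_def by auto
  have "\<And>x. 0 \<le> x \<Longrightarrow> x \<le> h \<Longrightarrow> DERIV k x :> k' x" using dk h by auto
  from MVT2[OF h(1) this] obtain z where z: "0 < z" "z < h" "k h - k 0 = (h - 0) * k' z" by blast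
  have "k' z > 0" using d2(2)[of z] z h k0 by simp
  then have "h * k' z > 0" using h(1) by simp
  then have "k h > k 0" using z by simp
  moreover have "k h \<le> k 0" using mx[of h] h by simp
  ultimately show False by simp
qed

lemma max_principle:
  fixes \<Phi> :: "'a::euclidean_space \<times> real \<Rightarrow> real"
  assumes \<Omega>: "open \<Omega>" "bounded \<Omega>"
    and cont: "continuous_on (closure \<Omega> \<times> {t0..}) \<Phi>"
    and bd: "\<And>x s. x \<in> frontier \<Omega> \<Longrightarrow> s \<ge> t0 \<Longrightarrow> \<Phi> (x,s) \<le> 0"
    and init: "\<And>x. x \<in> \<Omega> \<Longrightarrow> \<Phi> (x,t0) \<le> 0"
    and dt: "\<And>x t. x \<in> \<Omega> \<Longrightarrow> t > t0 \<Longrightarrow> ((\<lambda>s. \<Phi> (x,s)) has_real_derivative Ft x t) (at t)"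
    and da: "\<And>x t a. x \<in> \<Omega> \<Longrightarrow> t > t0 \<Longrightarrow> a \<in> Basis \<Longrightarrow>
               ((\<lambda>r. \<Phi> (x + r *\<^sub>R a, t)) has_real_derivative Fa a x t) (at 0)"
    and daa: "\<And>x t a. x \<in> \<Omega> \<Longrightarrow> t > t0 \<Longrightarrow> a \<in> Basis \<Longrightarrow>
               ((\<lambda>r. Fa a (x + r *\<^sub>R a) t) has_real_derivative Faa a x t) (at 0)"
    and heat: "\<And>x t. x \<in> \<Omega> \<Longrightarrow> t > t0 \<Longrightarrow> Ft x t = \<nu> * (\<Sum>a\<in>Basis. Faa a x t)"
    and nu: "\<nu> \<ge> 0"
    and x1: "x1 \<in> \<Omega>" and T: "T \<ge> t0"
  shows "\<Phi> (x1, T) \<le> 0"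
proof (rule ccontr)
  assume "\<not> \<Phi> (x1, T) \<le> 0"
  then have pos: "\<Phi> (x1, T) > 0" by simp
  then have T: "T > t0" using init[OF x1] T by (cases "T = t0") auto
  define \<epsilon> where "\<epsilon> = \<Phi> (x1, T) / (2 * (T - t0))"
  have \<epsilon>: "\<epsilon> > 0" using pos T unfolding \<epsilon>_def by simp
  define v where "v p = \<Phi> p - \<epsilon> * (snd p - t0)" for p
  define K where "K = closure \<Omega> \<times> {t0..T}"
  have cK: "compact K" unfolding K_def
    using \<Omega>(2) by (intro compact_Times compact_closure[THEN iffD2]) auto
  have KS: "K \<subseteq> closure \<Omega> \<times> {t0..}" unfolding K_def by auto
  have x1K: "(x1, T) \<in> K" unfolding K_def using x1 T closure_subset by auto
  have "continuous_on K v" unfolding v_def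
    by (intro continuous_intros continuous_on_subset[OF cont KS])
  from continuous_attains_sup[OF cK _ this] x1K obtain p where pK: "p \<in> K" and pmax: "\<And>q. q \<in> K \<Longrightarrow> v q \<le> v p"
    by blast
  obtain y s where p: "p = (y, s)" by (cases p)
  have vx1: "v (x1, T) = \<Phi> (x1, T) / 2" unfolding v_def \<epsilon>_def using T by (simp add: field_simps)
  have vpos: "v (y,s) > 0" using pmax[OF x1K] vx1 pos p by simp
  have s: "t0 \<le> s" "s \<le> T" and yc: "y \<in> closure \<Omega>" using pK p unfolding K_def by auto
  have y: "y \<in> \<Omega>"
  proof (rule ccontr)
    assume "y \<notin> \<Omega>"
    then have "y \<in> frontier \<Omega>" using yc \<Omega>(1) by (simp add: frontier_def interior_open)
    then have "\<Phi> (y,s) \<le> 0" using bd s by simp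
    then show False using vpos \<epsilon> s unfolding v_def by (simp add: mult_nonneg_nonneg) (smt (verit) mult_nonneg_nonneg)
  qed
  have st: "s > t0"
  proof (rule ccontr)
    assume "\<not> s > t0" then have "s = t0" using s by simp
    then show False using init[OF y] vpos unfolding v_def by simp
  qed
  have Ftpos: "Ft y s \<ge> \<epsilon>"
  proof (rule ccontr)
    assume "\<not> Ft y s \<ge> \<epsilon>"
    then have neg: "Ft y s - \<epsilon> < 0" by simp
    have "DERIV (\<lambda>s'. v (y, s')) s :> Ft y s - \<epsilon>"
      unfolding v_def using dt[OF y st] by (auto intro!: derivative_eq_intros)
    from DERIV_neg_dec_left[OF this neg] obtain d where d: "d > 0"
      "\<And>h. h > 0 \<Longrightarrow> h < d \<Longrightarrow> v (y, s) < v (y, s - h)" by blast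
    define h where "h = min d (s - t0) / 2"
    have m: "min d (s - t0) \<le> s - t0" "min d (s - t0) \<le> d" "min d (s - t0) > 0" using d st by auto
    have h3: "h \<le> (s - t0) / 2" using m(1) unfolding h_def by simp
    have h12: "h > 0" "h < d" using m unfolding h_def by auto
    have "s - h \<ge> t0" using h3 st by (simp add: field_simps)
    note h = h12 this
    have "(y, s - h) \<in> K" unfolding K_def using yc h s by auto
    then have "v (y, s - h) \<le> v (y, s)" using pmax p by simp
    then show False using d(2)[OF h(1,2)] by simp
  qed
  obtain d where d: "d > 0" "ball y d \<subseteq> \<Omega>" using \<Omega>(1) y open_contains_ball by blast
  have Faa: "Faa a y s \<le> 0" if a: "a \<in> Basis" for a
  proof (rule no_strict_max[OF d(1)])
    have yr: "y + r *\<^sub>R a \<in> \<Omega>" if "\<bar>r\<bar> < d" for r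
      using d(2) that a by (auto simp: dist_norm)
    show "DERIV (\<lambda>r. \<Phi> (y + r *\<^sub>R a, s)) r :> Fa a (y + r *\<^sub>R a) s" if "\<bar>r\<bar> < d" for r
    proof -
      have "((\<lambda>r'. \<Phi> ((y + r *\<^sub>R a) + r' *\<^sub>R a, s)) has_real_derivative Fa a (y + r *\<^sub>R a) s) (at 0)"
        using da[OF yr[OF that] st a] .
      then have "((\<lambda>r'. \<Phi> (y + (r' + r) *\<^sub>R a, s)) has_real_derivative Fa a (y + r *\<^sub>R a) s) (at 0)"
        by (simp add: algebra_simps)
      then show ?thesis using DERIV_shift[of "\<lambda>r. \<Phi> (y + r *\<^sub>R a, s)" _ 0 r] by simp
    qed
    show "DERIV (\<lambda>r. Fa a (y + r *\<^sub>R a) s) 0 :> Faa a y s" using daa[OF y st a] .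
    show "\<Phi> (y + r *\<^sub>R a, s) \<le> \<Phi> (y + 0 *\<^sub>R a, s)" if "\<bar>r\<bar> < d" for r
    proof -
      have "(y + r *\<^sub>R a, s) \<in> K" unfolding K_def using yr[OF that] s closure_subset by auto
      then have "v (y + r *\<^sub>R a, s) \<le> v (y, s)" using pmax p by simp
      then show ?thesis unfolding v_def by simp
    qed
  qed
  have "(\<Sum>a\<in>Basis. Faa a y s) \<le> 0" using Faa by (simp add: sum_nonpos)
  then have "Ft y s \<le> 0" using heat[OF y st] nu by (simp add: mult_nonneg_nonpos)
  then show False using Ftpos \<epsilon> by simp
qed

lemma basis_x: "(c::'a::euclidean_space) \<in> Basis \<Longrightarrow> (c, 0::real) \<in> Basis"
  by (simp add: Basis_prod_def)

lemma basis_t: "(0::'a::euclidean_space, 1::real) \<in> Basis"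
  by (simp add: Basis_prod_def)

lemma open_slice: "open V \<Longrightarrow> open {y. (y, t) \<in> V}"
proof -
  assume "open V"
  moreover have "continuous_on UNIV (\<lambda>y::'a::topological_space. (y, t))" by (intro continuous_intros)
  ultimately have "open ((\<lambda>y. (y, t)) -` V)" by (rule open_vimage)
  then show ?thesis by (simp add: vimage_def)
qed

lemma partial_const: "partial_dir b (\<lambda>y. c) x = 0"
proof -
  have "((\<lambda>y. c) has_derivative (\<lambda>h. 0)) (at x)" by simp
  from frechet_derivative_at[OF this] show ?thesis unfolding partial_dir_def by metis
qed

lemma divg_local:
  assumes "open S" "x \<in> S" "\<And>y. y \<in> S \<Longrightarrow> F y = G y"
  shows "divg F x = divg G x"
  unfolding divg_def using partial_local[OF assms] by simp

lemma grad_local: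
  assumes "open S" "x \<in> S" "\<And>y. y \<in> S \<Longrightarrow> F y = G y"
  shows "grad F x = grad G x"
  unfolding grad_def using partial_local[OF assms] by simp

lemma lap_local:
  assumes "open S" "x \<in> S" "\<And>y. y \<in> S \<Longrightarrow> F y = G y"
  shows "lap F x = lap G x"
  unfolding lap_def
proof (rule sum.cong[OF refl])
  fix b :: 'a assume "b \<in> Basis"
  show "partial_dir b (partial_dir b F) x = partial_dir b (partial_dir b G) x"
    by (rule partial_local[OF assms(1,2)]) (rule partial_local[OF assms(1) _ assms(3)])
qed

lemma lap_zero: "lap (\<lambda>y. 0) x = 0"
  unfolding lap_def by (simp add: partial_const[abs_def])

lemma grad_zero: "grad (\<lambda>y. 0) x = 0"
  unfolding grad_def by (simp add: partial_const)

lemma divg_inner: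
  assumes "F differentiable at x"
  shows "divg F x = (\<Sum>c\<in>Basis. partial_dir c (\<lambda>y. F y \<bullet> c) x)"
  unfolding divg_def using partial_inner[OF assms] by simp

lemma grad_inner: "(c::'a::euclidean_space) \<in> Basis \<Longrightarrow> grad f y \<bullet> c = partial_dir c f y"
  unfolding grad_def by (simp add: inner_sum_left inner_Basis if_distrib sum.delta cong: if_cong)

lemma vlap_inner: "(c::'a::euclidean_space) \<in> Basis \<Longrightarrow> vlap F y \<bullet> c = lap (\<lambda>z. F z \<bullet> c) y"
  unfolding vlap_def by (simp add: inner_sum_left inner_Basis if_distrib sum.delta cong: if_cong)

lemma divg_grad:
  fixes f :: "'a::euclidean_space \<Rightarrow> real"
  assumes "grad f differentiable at x"
  shows "divg (grad f) x = lap f x"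
  unfolding divg_inner[OF assms] lap_def
  by (rule sum.cong[OF refl]) (simp add: grad_inner)

lemma divg_add:
  assumes "F differentiable at x" "G differentiable at x"
  shows "divg (\<lambda>y. F y + G y) x = divg F x + divg G x"
  unfolding divg_def using partial_add[OF assms] by (simp add: inner_add_left sum.distrib)

lemma divg_diff:
  assumes "F differentiable at x" "G differentiable at x"
  shows "divg (\<lambda>y. F y - G y) x = divg F x - divg G x"
  unfolding divg_def using partial_diff[OF assms] by (simp add: inner_diff_left sum_subtractf)

lemma divg_scaleR:
  assumes "F differentiable at x"
  shows "divg (\<lambda>y. c *\<^sub>R F y) x = c * divg F x"
  unfolding divg_def using partial_scaleR[OF assms] by (simp add: sum_distrib_left)

lemma divg_slice:
  fixes G :: "'a::euclidean_space \<times> real \<Rightarrow> 'a"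
  assumes "G differentiable at (x,t)"
  shows "divg (\<lambda>y. G (y,t)) x = (\<Sum>c\<in>Basis. partial_dir (c,0) G (x,t) \<bullet> c)"
  unfolding divg_def using slice_partial[OF assms] by simp

definition LS :: "('a::euclidean_space \<times> real \<Rightarrow> real) \<Rightarrow> 'a \<times> real \<Rightarrow> real" where
  "LS F p = (\<Sum>a\<in>Basis. partial_dir (a,0) (partial_dir (a,0) F) p)"

lemma slice_partial_on:
  fixes F :: "'a::euclidean_space \<times> real \<Rightarrow> 'b::real_normed_vector"
  assumes "\<And>q. q \<in> V \<Longrightarrow> F differentiable at q" "y \<in> {y. (y,t) \<in> V}"
  shows "partial_dir b (\<lambda>y. F (y,t)) y = partial_dir (b,0) F (y,t)"
  using slice_partial[of F y t b] assms by simp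

lemma lap_slice:
  fixes F :: "'a::euclidean_space \<times> real \<Rightarrow> real"
  assumes V: "open V" and sm: "sm V F" and x: "(x,t) \<in> V"
  shows "lap (\<lambda>y. F (y,t)) x = LS F (x,t)"
  unfolding lap_def LS_def
proof (rule sum.cong[OF refl])
  fix a :: 'a assume a: "a \<in> Basis"
  have "partial_dir a (partial_dir a (\<lambda>y. F (y,t))) x = partial_dir a (\<lambda>y. partial_dir (a,0) F (y,t)) x"
    by (rule partial_local[OF open_slice[OF V]]) (use x slice_partial_on[OF sm_diff[OF sm]] in auto)
  also have "\<dots> = partial_dir (a,0) (partial_dir (a,0) F) (x,t)"
    by (rule slice_partial) (rule sm_diff[OF sm_partial[OF sm basis_x[OF a]] x])
  finally show "partial_dir a (partial_dir a (\<lambda>y. F (y,t))) x = partial_dir (a,0) (partial_dir (a,0) F) (x,t)" .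
qed

lemma LS_diff:
  fixes F :: "'a::euclidean_space \<times> real \<Rightarrow> real"
  assumes "sm V F" "p \<in> V"
  shows "LS F differentiable at p"
  unfolding LS_def[abs_def]
  by (intro differentiable_sum ballI sm_diff[OF sm_partial[OF sm_partial[OF assms(1)]] assms(2)] basis_x) auto

lemma time_deriv_vec:
  fixes F :: "'a::euclidean_space \<times> real \<Rightarrow> 'b::real_normed_vector"
  assumes "F differentiable at (x,t)"
  shows "((\<lambda>s. F (x,s)) has_vector_derivative partial_dir (0,1) F (x,t)) (at t)"
proof -
  have e: "(x, 0) + s *\<^sub>R (0::'a, 1::real) = (x, s)" for s by simp
  show ?thesis using line_deriv[of F "(x,0)" t "(0,1)"] assms unfolding e by simp
qed

lemma time_deriv:
  fixes F :: "'a::euclidean_space \<times> real \<Rightarrow> real"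
  assumes "F differentiable at (x,t)"
  shows "((\<lambda>s. F (x,s)) has_real_derivative partial_dir (0,1) F (x,t)) (at t)"
  using time_deriv_vec[OF assms] by (simp add: has_real_derivative_iff_has_vector_derivative)

lemma space_deriv:
  fixes F :: "'a::euclidean_space \<times> real \<Rightarrow> real"
  assumes "F differentiable at (x,t)"
  shows "((\<lambda>r. F (x + r *\<^sub>R a, t)) has_real_derivative partial_dir (a,0) F (x,t)) (at 0)"
proof -
  have e: "(x, t) + r *\<^sub>R (a, 0::real) = (x + r *\<^sub>R a, t)" for r by simp
  show ?thesis using line_deriv_real[of F "(x,t)" 0 "(a,0)"] assms unfolding e by simp
qed

lemma diff_scaleR_left: "f differentiable at x \<Longrightarrow> (\<lambda>y. f y *\<^sub>R c) differentiable at x"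
  using has_derivative_scaleR_left[OF partial_dir_has] unfolding differentiable_def by blast

lemma diff_scaleR_right: "f differentiable at x \<Longrightarrow> (\<lambda>y. c *\<^sub>R f y) differentiable at x"
  using has_derivative_scaleR_right[OF partial_dir_has] unfolding differentiable_def by blast

lemma open_tslice: "open V \<Longrightarrow> open {s. (x, s) \<in> V}"
proof -
  assume "open V"
  moreover have "continuous_on UNIV (\<lambda>s::'b::topological_space. (x, s))" by (intro continuous_intros)
  ultimately have "open ((\<lambda>s. (x, s)) -` V)" by (rule open_vimage)
  then show ?thesis by (simp add: vimage_def)
qed

lemma divw_zero:
  fixes \<Omega> :: "'a::euclidean_space set"
  assumes \<Omega>o: "open \<Omega>" and \<Omega>b: "bounded \<Omega>" and nu: "\<nu> > 0"
    and sol: "GePUP_E_solution \<Omega> n \<nu> lam g w u q t0"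
  shows "(\<forall>x\<in>\<Omega>. \<forall>t\<ge>t0. divg (\<lambda>y. w y t) x = 0) \<and>
         (\<forall>x\<in>\<Omega>. \<forall>t\<ge>t0. \<exists>D. ((\<lambda>s. divg (\<lambda>y. w y s) x) has_real_derivative D) (at t))"
proof -
  note parts = sol[unfolded GePUP_E_solution_def]
  note ex = parts[THEN conjunct1]
  note mom = parts[THEN conjunct2, THEN conjunct1]
  note bdry = parts[THEN conjunct2, THEN conjunct2, THEN conjunct1]
  note ler = parts[THEN conjunct2, THEN conjunct2, THEN conjunct2, THEN conjunct1]
  note poi = parts[THEN conjunct2, THEN conjunct2, THEN conjunct2, THEN conjunct2, THEN conjunct2, THEN conjunct1]
  note ini = parts[THEN conjunct2, THEN conjunct2, THEN conjunct2, THEN conjunct2, THEN conjunct2, THEN conjunct2, THEN conjunct2]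
  define W where "W = (\<lambda>p::'a \<times> real. w (fst p) (snd p))"
  define Q where "Q = (\<lambda>p::'a \<times> real. q (fst p) (snd p))"
  obtain V where V: "open V" and VS: "closure \<Omega> \<times> {t0..} \<subseteq> V"
    and cW: "Cinf_on V W" and cQ: "Cinf_on V Q"
    using ex unfolding W_def Q_def by blast
  have smW: "sm V W" using Cinf_sm[OF cW] .
  have smQ: "sm V Q" using Cinf_sm[OF cQ] .
  define Wc where "Wc = (\<lambda>c p. W p \<bullet> c)"
  have smWc: "sm V (Wc c)" for c unfolding Wc_def using sm_inner[OF V smW] .
  define \<Theta> where "\<Theta> = (\<lambda>p. \<Sum>c\<in>Basis. partial_dir (c,0) (Wc c) p)"
  have sm\<Theta>: "sm V \<Theta>" unfolding \<Theta>_def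
    by (rule sm_sum[OF V finite_Basis]) (rule sm_partial[OF smWc basis_x])
  define e0 :: "'a \<times> real" where "e0 = (0,1)"
  have e0: "e0 \<in> Basis" unfolding e0_def by (rule basis_t)
  have Vt: "(x,t) \<in> V" if "x \<in> closure \<Omega>" "t \<ge> t0" for x t using VS that by auto
  have wslice: "(\<lambda>y. w y t) = (\<lambda>y. W (y,t))" for t by (simp add: W_def)
  have qslice: "(\<lambda>y. q y t) = (\<lambda>y. Q (y,t))" for t by (simp add: Q_def)
  have theta_eq: "divg (\<lambda>y. w y t) x = \<Theta> (x,t)" if p: "(x,t) \<in> V" for x t
  proof -
    have "divg (\<lambda>y. w y t) x = (\<Sum>c\<in>Basis. partial_dir (c,0) W (x,t) \<bullet> c)"
      unfolding wslice by (rule divg_slice[OF sm_diff[OF smW p]])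
    also have "\<dots> = \<Theta> (x,t)" unfolding \<Theta>_def Wc_def
      using partial_inner[OF sm_diff[OF smW p]] by simp
    finally show ?thesis .
  qed
  \<comment> \<open>initial divergence vanishes (Leray projection)\<close>
  have init0: "divg (\<lambda>y. w y t0) x = 0" if x: "x \<in> \<Omega>" for x
  proof -
    have "is_leray_proj \<Omega> n (\<lambda>y. w y t0) (\<lambda>y. u y t0)" using ler by simp
    then obtain \<phi> U where U: "open U" "closure \<Omega> \<subseteq> U" and c2: "Ck_on 2 U \<phi>"
      and lp: "\<forall>x\<in>\<Omega>. lap \<phi> x = divg (\<lambda>y. w y t0) x"
      and pj: "\<forall>x\<in>\<Omega>. u x t0 = w x t0 - grad \<phi> x"
      unfolding is_leray_proj_def by blast
    have xU: "x \<in> U" using U x closure_subset by blast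
    have dphi: "partial_dir b \<phi> differentiable at x" if "b \<in> Basis" for b
    proof -
      have "set [b] \<subseteq> Basis" "length [b] < 2" using that by auto
      then show ?thesis using c2 xU unfolding Ck_on_def by fastforce
    qed
    have dgrad: "grad \<phi> differentiable at x"
      unfolding grad_def[abs_def]
      by (intro differentiable_sum finite_Basis ballI diff_scaleR_left dphi)
    have xt0: "(x,t0) \<in> V" using Vt x closure_subset by auto
    have dw: "(\<lambda>y. w y t0) differentiable at x"
      unfolding wslice by (rule slice_diff[OF sm_diff[OF smW xt0]])
    have "divg (\<lambda>y. w y t0) x = divg (\<lambda>y. u y t0) x"
      by (rule divg_local[OF \<Omega>o x]) (use ini closure_subset in auto)
    also have "\<dots> = divg (\<lambda>y. w y t0 - grad \<phi> y) x"
      by (rule divg_local[OF \<Omega>o x]) (use pj in auto)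
    also have "\<dots> = divg (\<lambda>y. w y t0) x - divg (grad \<phi>) x"
      by (rule divg_diff[OF dw dgrad])
    also have "\<dots> = 0" using divg_grad[OF dgrad] lp x by simp
    finally show ?thesis .
  qed
  have heat: "partial_dir e0 \<Theta> (x,t) = \<nu> * LS \<Theta> (x,t)" if x: "x \<in> \<Omega>" and t: "t \<ge> t0" for x t
  proof -
    define p where "p = (x,t)"
    have p: "p \<in> V" unfolding p_def using Vt x t closure_subset by auto
    define S where "S = {y. (y,t) \<in> V}"
    have S: "open S" "x \<in> S" unfolding S_def using open_slice[OF V] p p_def by auto
    have \<Omega>S: "\<Omega> \<subseteq> S" unfolding S_def using Vt t closure_subset by auto
    have dWc1: "partial_dir (c,0) (Wc c) differentiable at q" if "c \<in> Basis" "q \<in> V" for c q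
      using sm_diff[OF sm_partial[OF smWc basis_x[OF that(1)]] that(2)] .
    have "partial_dir e0 \<Theta> p = (\<Sum>c\<in>Basis. partial_dir e0 (partial_dir (c,0) (Wc c)) p)"
      unfolding \<Theta>_def by (rule partial_sum[OF finite_Basis]) (rule dWc1[OF _ p])
    also have "\<dots> = (\<Sum>c\<in>Basis. partial_dir (c,0) (partial_dir e0 (Wc c)) p)"
      by (rule sum.cong[OF refl], rule clairaut_sm[OF V smWc p basis_x e0])
    also have "\<dots> = (\<Sum>c\<in>Basis. partial_dir (c,0) (partial_dir e0 W) p \<bullet> c)"
    proof (rule sum.cong[OF refl])
      fix c :: 'a assume c: "c \<in> Basis"
      have "partial_dir (c,0) (partial_dir e0 (Wc c)) p = partial_dir (c,0) (\<lambda>q. partial_dir e0 W q \<bullet> c) p"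
        by (rule partial_local[OF V p]) (simp add: Wc_def partial_inner[OF sm_diff[OF smW]])
      also have "\<dots> = partial_dir (c,0) (partial_dir e0 W) p \<bullet> c"
        by (rule partial_inner[OF sm_diff[OF sm_partial[OF smW e0] p]])
      finally show "partial_dir (c,0) (partial_dir e0 (Wc c)) p = partial_dir (c,0) (partial_dir e0 W) p \<bullet> c" .
    qed
    also have "\<dots> = divg (\<lambda>y. partial_dir e0 W (y,t)) x"
      unfolding p_def by (rule divg_slice[symmetric], rule sm_diff[OF sm_partial[OF smW e0] p[unfolded p_def]])
    finally have A: "partial_dir e0 \<Theta> p = divg (\<lambda>y. partial_dir e0 W (y,t)) x" .
    define Gt where "Gt = (\<lambda>y. g y t - conv (\<lambda>z. u z t) (\<lambda>z. u z t) y)"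
    define qt where "qt = (\<lambda>y. q y t)"
    define wt where "wt = (\<lambda>y. w y t)"
    have Rt: "partial_dir e0 W (y,t) = Gt y - grad qt y + \<nu> *\<^sub>R vlap wt y" if y: "y \<in> \<Omega>" for y
    proof -
      have yt: "(y,t) \<in> V" using Vt y t closure_subset by auto
      have "((\<lambda>s. W (y,s)) has_vector_derivative partial_dir e0 W (y,t)) (at t)"
        unfolding e0_def by (rule time_deriv_vec[OF sm_diff[OF smW yt]])
      then have "vector_derivative (\<lambda>s. w y s) (at t) = partial_dir e0 W (y,t)"
        using vector_derivative_at unfolding W_def by fastforce
      then show ?thesis using mom t y unfolding Gt_def qt_def wt_def by simp
    qed
    have B: "divg (\<lambda>y. partial_dir e0 W (y,t)) x = divg (\<lambda>y. (Gt y - grad qt y) + \<nu> *\<^sub>R vlap wt y) x"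
      by (rule divg_local[OF \<Omega>o x]) (simp add: Rt)
    have dgrad: "grad qt differentiable at x"
    proof -
      have "(\<lambda>y. \<Sum>b\<in>Basis. partial_dir (b,0) Q (y,t) *\<^sub>R b) differentiable at x"
        by (intro differentiable_sum finite_Basis ballI diff_scaleR_left slice_diff
            sm_diff[OF sm_partial[OF smQ basis_x] p[unfolded p_def]])
      moreover have "(\<Sum>b\<in>Basis. partial_dir (b,0) Q (y,t) *\<^sub>R b) = grad qt y" if "y \<in> S" for y
      proof -
        have yt: "(y,t) \<in> V" using that unfolding S_def by simp
        show ?thesis unfolding grad_def qt_def qslice
          using slice_partial[OF sm_diff[OF smQ yt]] by simp
      qed
      ultimately show ?thesis by (rule differentiable_local[OF _ S])
    qed
    have vlap_eq: "vlap wt y = (\<Sum>c\<in>Basis. LS (Wc c) (y,t) *\<^sub>R c)" if "y \<in> S" for y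
    proof -
      have yt: "(y,t) \<in> V" using that unfolding S_def by simp
      have "(\<lambda>z. wt z \<bullet> c) = (\<lambda>z. Wc c (z,t))" for c unfolding wt_def Wc_def W_def by simp
      then show ?thesis unfolding vlap_def using lap_slice[OF V smWc yt] by simp
    qed
    have dvlap: "vlap wt differentiable at x"
    proof -
      have "(\<lambda>y. \<Sum>c\<in>Basis. LS (Wc c) (y,t) *\<^sub>R c) differentiable at x"
        by (intro differentiable_sum finite_Basis ballI diff_scaleR_left slice_diff LS_diff[OF smWc p[unfolded p_def]])
      then show ?thesis by (rule differentiable_local[OF _ S]) (simp add: vlap_eq)
    qed
    have dR: "(\<lambda>y. partial_dir e0 W (y,t)) differentiable at x"
      by (rule slice_diff[OF sm_diff[OF sm_partial[OF smW e0] p[unfolded p_def]]])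
    have dGt: "Gt differentiable at x"
    proof -
      have "(\<lambda>y. partial_dir e0 W (y,t) + grad qt y - \<nu> *\<^sub>R vlap wt y) differentiable at x"
        by (intro differentiable_diff differentiable_add dR dgrad diff_scaleR_right dvlap)
      moreover have "partial_dir e0 W (y,t) + grad qt y - \<nu> *\<^sub>R vlap wt y = Gt y" if "y \<in> \<Omega>" for y
        using Rt[OF that] by simp
      ultimately show ?thesis by (rule differentiable_local[OF _ \<Omega>o x])
    qed
    have C: "divg (\<lambda>y. (Gt y - grad qt y) + \<nu> *\<^sub>R vlap wt y) x = divg Gt x - divg (grad qt) x + \<nu> * divg (vlap wt) x"
    proof -
      have d1: "(\<lambda>y. Gt y - grad qt y) differentiable at x" by (intro differentiable_diff dGt dgrad)
      have d2: "(\<lambda>y. \<nu> *\<^sub>R vlap wt y) differentiable at x" by (intro diff_scaleR_right dvlap)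
      show ?thesis using divg_add[OF d1 d2] divg_diff[OF dGt dgrad] divg_scaleR[OF dvlap] by simp
    qed
    have D: "divg (grad qt) x = divg Gt x"
      using divg_grad[OF dgrad] poi t x unfolding qt_def Gt_def by simp
    have E: "divg (vlap wt) x = (\<Sum>c\<in>Basis. \<Sum>a\<in>Basis. partial_dir (c,0) (partial_dir (a,0) (partial_dir (a,0) (Wc c))) p)"
    proof -
      have "divg (vlap wt) x = (\<Sum>c\<in>Basis. partial_dir c (\<lambda>y. vlap wt y \<bullet> c) x)"
        by (rule divg_inner[OF dvlap])
      also have "\<dots> = (\<Sum>c\<in>Basis. partial_dir c (\<lambda>y. LS (Wc c) (y,t)) x)"
      proof (rule sum.cong[OF refl])
        fix c :: 'a assume c: "c \<in> Basis"
        show "partial_dir c (\<lambda>y. vlap wt y \<bullet> c) x = partial_dir c (\<lambda>y. LS (Wc c) (y,t)) x"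
          by (rule partial_local[OF S]) (simp add: vlap_eq inner_sum_left inner_Basis c if_distrib sum.delta cong: if_cong)
      qed
      also have "\<dots> = (\<Sum>c\<in>Basis. partial_dir (c,0) (LS (Wc c)) p)"
        unfolding p_def by (intro sum.cong refl slice_partial LS_diff[OF smWc p[unfolded p_def]])
      also have "\<dots> = (\<Sum>c\<in>Basis. \<Sum>a\<in>Basis. partial_dir (c,0) (partial_dir (a,0) (partial_dir (a,0) (Wc c))) p)"
        unfolding LS_def[abs_def]
        by (intro sum.cong refl partial_sum finite_Basis sm_diff[OF sm_partial[OF sm_partial[OF smWc]] p] basis_x)
      finally show ?thesis .
    qed
    have F: "LS \<Theta> p = (\<Sum>a\<in>Basis. \<Sum>c\<in>Basis. partial_dir (a,0) (partial_dir (a,0) (partial_dir (c,0) (Wc c))) p)"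
      unfolding LS_def
    proof (rule sum.cong[OF refl])
      fix a :: 'a assume a: "a \<in> Basis"
      have "partial_dir (a,0) (partial_dir (a,0) \<Theta>) p
          = partial_dir (a,0) (\<lambda>q. \<Sum>c\<in>Basis. partial_dir (a,0) (partial_dir (c,0) (Wc c)) q) p"
        by (rule partial_local[OF V p]) (unfold \<Theta>_def, intro partial_sum finite_Basis dWc1)
      also have "\<dots> = (\<Sum>c\<in>Basis. partial_dir (a,0) (partial_dir (a,0) (partial_dir (c,0) (Wc c))) p)"
        by (intro partial_sum finite_Basis sm_diff[OF sm_partial[OF sm_partial[OF smWc]] p] basis_x a)
      finally show "partial_dir (a,0) (partial_dir (a,0) \<Theta>) p
          = (\<Sum>c\<in>Basis. partial_dir (a,0) (partial_dir (a,0) (partial_dir (c,0) (Wc c))) p)" .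
    qed
    have swap: "partial_dir (c,0) (partial_dir (a,0) (partial_dir (a,0) (Wc c))) p
         = partial_dir (a,0) (partial_dir (a,0) (partial_dir (c,0) (Wc c))) p" if a: "a \<in> Basis" and c: "c \<in> Basis" for a c
    proof -
      have "partial_dir (c,0) (partial_dir (a,0) (partial_dir (a,0) (Wc c))) p
          = partial_dir (a,0) (partial_dir (c,0) (partial_dir (a,0) (Wc c))) p"
        by (rule clairaut_sm[OF V sm_partial[OF smWc basis_x[OF a]] p basis_x[OF a] basis_x[OF c]])
      also have "\<dots> = partial_dir (a,0) (partial_dir (a,0) (partial_dir (c,0) (Wc c))) p"
        by (rule partial_local[OF V p]) (rule clairaut_sm[OF V smWc _ basis_x[OF a] basis_x[OF c]])
      finally show ?thesis .
    qed
    have "partial_dir e0 \<Theta> p = \<nu> * divg (vlap wt) x"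
      using A B C D by simp
    also have "\<dots> = \<nu> * LS \<Theta> p"
    proof -
      have "divg (vlap wt) x = (\<Sum>c\<in>Basis. \<Sum>a\<in>Basis. partial_dir (a,0) (partial_dir (a,0) (partial_dir (c,0) (Wc c))) p)"
        unfolding E by (intro sum.cong refl swap)
      also have "\<dots> = LS \<Theta> p" unfolding F by (rule sum.swap)
      finally show ?thesis by simp
    qed
    finally show ?thesis unfolding p_def .
  qed
  \<comment> \<open>apply the maximum principle to Theta and -Theta\<close>
  have cont: "continuous_on (closure \<Omega> \<times> {t0..}) \<Theta>"
    by (rule continuous_on_subset[OF sm_cont[OF sm\<Theta>] VS])
  have fr: "x \<in> closure \<Omega>" if "x \<in> frontier \<Omega>" for x using that by (simp add: frontier_def)
  have bd: "\<Theta> (x,s) = 0" if "x \<in> frontier \<Omega>" "s \<ge> t0" for x s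
    using theta_eq[OF Vt[OF fr[OF that(1)] that(2)]] bdry that by simp
  have in0: "\<Theta> (x,t0) = 0" if "x \<in> \<Omega>" for x
  proof -
    have "x \<in> closure \<Omega>" using that closure_subset by auto
    then show ?thesis using theta_eq[OF Vt[OF _ order_refl]] init0[OF that] by simp
  qed
  have inV: "(x,t) \<in> V" if "x \<in> \<Omega>" "t0 < t" for x t
  proof -
    have "x \<in> closure \<Omega>" using that closure_subset by auto
    then show ?thesis using Vt that by simp
  qed
  have dt: "((\<lambda>s. \<Theta> (x,s)) has_real_derivative partial_dir e0 \<Theta> (x,t)) (at t)" if "x \<in> \<Omega>" "t0 < t" for x t
    unfolding e0_def by (rule time_deriv[OF sm_diff[OF sm\<Theta> inV[OF that]]])
  have da: "((\<lambda>r. \<Theta> (x + r *\<^sub>R a, t)) has_real_derivative partial_dir (a,0) \<Theta> (x,t)) (at 0)"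
    if "x \<in> \<Omega>" "t0 < t" "a \<in> Basis" for x t a
    by (rule space_deriv[OF sm_diff[OF sm\<Theta> inV[OF that(1,2)]]])
  have daa: "((\<lambda>r. partial_dir (a,0) \<Theta> (x + r *\<^sub>R a, t)) has_real_derivative
       partial_dir (a,0) (partial_dir (a,0) \<Theta>) (x,t)) (at 0)"
    if "x \<in> \<Omega>" "t0 < t" "a \<in> Basis" for x t a
    by (rule space_deriv[OF sm_diff[OF sm_partial[OF sm\<Theta> basis_x[OF that(3)]] inV[OF that(1,2)]]])
  have heat': "partial_dir e0 \<Theta> (x,t) = \<nu> * (\<Sum>a\<in>Basis. partial_dir (a,0) (partial_dir (a,0) \<Theta>) (x,t))"
    if "x \<in> \<Omega>" "t0 < t" for x t
    using heat[OF that(1)] that(2) unfolding LS_def by simp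
  have le1: "\<Theta> (x,t) \<le> 0" if "x \<in> \<Omega>" "t \<ge> t0" for x t
    by (rule max_principle[where \<Phi>=\<Theta> and Ft="\<lambda>x t. partial_dir e0 \<Theta> (x,t)"
          and Fa="\<lambda>a x t. partial_dir (a,0) \<Theta> (x,t)" and Faa="\<lambda>a x t. partial_dir (a,0) (partial_dir (a,0) \<Theta>) (x,t)"
          and \<nu>=\<nu>, OF \<Omega>o \<Omega>b cont _ _ dt da daa heat' _ that])
      (use bd in0 nu in auto)
  have le2: "- \<Theta> (x,t) \<le> 0" if "x \<in> \<Omega>" "t \<ge> t0" for x t
  proof (rule max_principle[where \<Phi>="\<lambda>p. - \<Theta> p" and Ft="\<lambda>x t. - partial_dir e0 \<Theta> (x,t)"
          and Fa="\<lambda>a x t. - partial_dir (a,0) \<Theta> (x,t)" and Faa="\<lambda>a x t. - partial_dir (a,0) (partial_dir (a,0) \<Theta>) (x,t)"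
          and \<nu>=\<nu>, OF \<Omega>o \<Omega>b _ _ _ _ _ _ _ _ that])
    show "continuous_on (closure \<Omega> \<times> {t0..}) (\<lambda>p. - \<Theta> p)" using cont by (intro continuous_intros)
    show "\<And>x s. x \<in> frontier \<Omega> \<Longrightarrow> t0 \<le> s \<Longrightarrow> - \<Theta> (x, s) \<le> 0" using bd by simp
    show "\<And>x. x \<in> \<Omega> \<Longrightarrow> - \<Theta> (x, t0) \<le> 0" using in0 by simp
    show "\<And>x t. x \<in> \<Omega> \<Longrightarrow> t0 < t \<Longrightarrow> ((\<lambda>s. - \<Theta> (x, s)) has_real_derivative - partial_dir e0 \<Theta> (x, t)) (at t)"
      using dt by (intro DERIV_minus)
    show "\<And>x t a. x \<in> \<Omega> \<Longrightarrow> t0 < t \<Longrightarrow> a \<in> Basis \<Longrightarrow>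
      ((\<lambda>r. - \<Theta> (x + r *\<^sub>R a, t)) has_real_derivative - partial_dir (a,0) \<Theta> (x, t)) (at 0)"
      using da by (intro DERIV_minus)
    show "\<And>x t a. x \<in> \<Omega> \<Longrightarrow> t0 < t \<Longrightarrow> a \<in> Basis \<Longrightarrow>
      ((\<lambda>r. - partial_dir (a,0) \<Theta> (x + r *\<^sub>R a, t)) has_real_derivative - partial_dir (a,0) (partial_dir (a,0) \<Theta>) (x, t)) (at 0)"
      using daa by (intro DERIV_minus)
    show "\<And>x t. x \<in> \<Omega> \<Longrightarrow> t0 < t \<Longrightarrow> - partial_dir e0 \<Theta> (x, t) = \<nu> * (\<Sum>a\<in>Basis. - partial_dir (a,0) (partial_dir (a,0) \<Theta>) (x, t))"
      using heat' by (simp add: sum_negf)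
    show "0 \<le> \<nu>" using nu by simp
  qed
  have zero: "\<Theta> (x,t) = 0" if "x \<in> \<Omega>" "t \<ge> t0" for x t
    using le1[OF that] le2[OF that] by simp
  have inV': "(x,t) \<in> V" if "x \<in> \<Omega>" "t0 \<le> t" for x t
  proof -
    have "x \<in> closure \<Omega>" using that closure_subset by auto
    then show ?thesis using Vt that by simp
  qed
  show ?thesis
  proof (intro conjI ballI allI impI)
    fix x t assume x: "x \<in> \<Omega>" and t: "t0 \<le> t"
    show "divg (\<lambda>y. w y t) x = 0" using theta_eq[OF inV'[OF x t]] zero[OF x t] by simp
  next
    fix x t assume x: "x \<in> \<Omega>" and t: "t0 \<le> t"
    have p: "(x,t) \<in> V" by (rule inV'[OF x t])
    have "((\<lambda>s. \<Theta> (x,s)) has_real_derivative partial_dir e0 \<Theta> (x,t)) (at t)"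
      unfolding e0_def by (rule time_deriv[OF sm_diff[OF sm\<Theta> p]])
    then have "((\<lambda>s. divg (\<lambda>y. w y s) x) has_real_derivative partial_dir e0 \<Theta> (x,t)) (at t)"
      by (rule has_field_derivative_transform_within_open[OF _ open_tslice[OF V]]) (use p theta_eq in auto)
    then show "\<exists>D. ((\<lambda>s. divg (\<lambda>y. w y s) x) has_real_derivative D) (at t)" by blast
  qed
qed

lemma claim1_aux:
  fixes f :: "real \<Rightarrow> real"
  assumes D: "(f has_real_derivative D) (at t)" and z: "\<And>s. s \<ge> t \<Longrightarrow> f s = 0"
  shows "D = 0"
proof (rule ccontr)
  assume "D \<noteq> 0"
  then consider "D > 0" | "D < 0" by linarith
  then show False
  proof cases
    case 1
    from DERIV_pos_inc_right[OF D 1] obtain d where "d > 0" "\<And>h. h > 0 \<Longrightarrow> h < d \<Longrightarrow> f t < f (t + h)" by blast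
    then have "f t < f (t + d/2)" by simp
    then show False using z[of t] z[of "t + d/2"] \<open>d > 0\<close> by simp
  next
    case 2
    have "((\<lambda>s. - f s) has_real_derivative - D) (at t)" by (rule DERIV_minus[OF D])
    from DERIV_pos_inc_right[OF this] 2 obtain d where "d > 0" "\<And>h. h > 0 \<Longrightarrow> h < d \<Longrightarrow> - f t < - f (t + h)" by auto
    then have "- f t < - f (t + d/2)" by simp
    then show False using z[of t] z[of "t + d/2"] \<open>d > 0\<close> by simp
  qed
qed

lemma L2norm_zero:
  assumes "\<And>x. x \<in> \<Omega> \<Longrightarrow> f x = 0"
  shows "L2norm \<Omega> f = 0"
proof -
  have "integral \<Omega> (\<lambda>x. (norm (f x))\<^sup>2) = integral \<Omega> (\<lambda>x. 0)"
    by (rule integral_cong) (simp add: assms)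
  then show ?thesis unfolding L2norm_def by simp
qed

theorem theorem4:
  fixes \<Omega> :: "'a::euclidean_space set" and \<rho> :: "'a \<Rightarrow> real"
  assumes bounded: "bounded \<Omega>"
    and connected: "connected \<Omega>"
    and defining_fun: "\<Omega> = {x. \<rho> x < 0}"
    and rho_smooth: "Cinf_on UNIV \<rho>"
    and rho_regular: "\<forall>x. \<rho> x = 0 \<longrightarrow> grad \<rho> x \<noteq> 0"
  shows "(\<forall>\<nu> lam g w u q t0. \<nu> > 0 \<and> lam \<ge> 0 \<and>
            GePUP_E_solution \<Omega> (normal_of \<rho>) \<nu> lam g w u q t0 \<longrightarrow>
            (\<forall>t\<ge>t0. \<forall>x\<in>\<Omega>.
               deriv (\<lambda>s. divg (\<lambda>y. w y s) x) t = \<nu> * lap (\<lambda>y. divg (\<lambda>z. w z t) y) x) \<and>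
            (\<forall>t\<ge>t0.
               ((\<lambda>s. (L2norm \<Omega> (\<lambda>x. divg (\<lambda>y. w y s) x))\<^sup>2) has_real_derivative
                  (- 2 * \<nu> * (L2norm \<Omega> (\<lambda>x. grad (\<lambda>y. divg (\<lambda>z. w z t) y) x))\<^sup>2))
               (at t within {t0..}))) \<and>
         (\<exists>C>0. \<forall>\<nu> lam g w u q t0. \<nu> > 0 \<and> lam \<ge> 0 \<and>
            GePUP_E_solution \<Omega> (normal_of \<rho>) \<nu> lam g w u q t0 \<longrightarrow>
            (\<forall>t\<ge>t0. L2norm \<Omega> (\<lambda>x. divg (\<lambda>y. w y t) x)
                 \<le> exp (- \<nu> * C * (t - t0)) * L2norm \<Omega> (\<lambda>x. divg (\<lambda>y. w y t0) x)))"
proof -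
  have crho: "continuous_on UNIV \<rho>" by (rule sm_cont[OF Cinf_sm[OF rho_smooth]])
  have \<Omega>o: "open \<Omega>" unfolding defining_fun
    by (rule open_Collect_less[OF crho]) (intro continuous_intros)
  note main = divw_zero[OF \<Omega>o bounded]
  show ?thesis
  proof (rule conjI)
    show "\<forall>\<nu> lam g w u q t0. \<nu> > 0 \<and> lam \<ge> 0 \<and>
            GePUP_E_solution \<Omega> (normal_of \<rho>) \<nu> lam g w u q t0 \<longrightarrow>
            (\<forall>t\<ge>t0. \<forall>x\<in>\<Omega>.
               deriv (\<lambda>s. divg (\<lambda>y. w y s) x) t = \<nu> * lap (\<lambda>y. divg (\<lambda>z. w z t) y) x) \<and>
            (\<forall>t\<ge>t0.
               ((\<lambda>s. (L2norm \<Omega> (\<lambda>x. divg (\<lambda>y. w y s) x))\<^sup>2) has_real_derivative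
                  (- 2 * \<nu> * (L2norm \<Omega> (\<lambda>x. grad (\<lambda>y. divg (\<lambda>z. w z t) y) x))\<^sup>2))
               (at t within {t0..}))"
  proof (intro allI impI)
    fix \<nu> lam g w u q and t0 :: real
    assume H: "\<nu> > 0 \<and> lam \<ge> 0 \<and> GePUP_E_solution \<Omega> (normal_of \<rho>) \<nu> lam g w u q t0"
    note M = main[of \<nu> "normal_of \<rho>" lam g w u q t0]
    have Z: "\<And>x t. x \<in> \<Omega> \<Longrightarrow> t \<ge> t0 \<Longrightarrow> divg (\<lambda>y. w y t) x = 0" using M H by blast
    have Dx: "\<And>x t. x \<in> \<Omega> \<Longrightarrow> t \<ge> t0 \<Longrightarrow> \<exists>D. ((\<lambda>s. divg (\<lambda>y. w y s) x) has_real_derivative D) (at t)"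
      using M H by blast
    have PA: "\<forall>t\<ge>t0. \<forall>x\<in>\<Omega>. deriv (\<lambda>s. divg (\<lambda>y. w y s) x) t = \<nu> * lap (\<lambda>y. divg (\<lambda>z. w z t) y) x"
    proof (intro allI impI ballI)
      fix t x assume t: "t0 \<le> t" and x: "x \<in> \<Omega>"
      have "lap (\<lambda>y. divg (\<lambda>z. w z t) y) x = lap (\<lambda>y. 0) x"
        by (rule lap_local[OF \<Omega>o x]) (use Z t in auto)
      then have R: "lap (\<lambda>y. divg (\<lambda>z. w z t) y) x = 0" using lap_zero by simp
      obtain D where D: "((\<lambda>s. divg (\<lambda>y. w y s) x) has_real_derivative D) (at t)" using Dx[OF x t] by blast
      have "D = 0" by (rule claim1_aux[OF D]) (use Z x t in auto)
      then show "deriv (\<lambda>s. divg (\<lambda>y. w y s) x) t = \<nu> * lap (\<lambda>y. divg (\<lambda>z. w z t) y) x"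
        using DERIV_imp_deriv[OF D] R by simp
    qed
    have PB: "\<forall>t\<ge>t0. ((\<lambda>s. (L2norm \<Omega> (\<lambda>x. divg (\<lambda>y. w y s) x))\<^sup>2) has_real_derivative
                  (- 2 * \<nu> * (L2norm \<Omega> (\<lambda>x. grad (\<lambda>y. divg (\<lambda>z. w z t) y) x))\<^sup>2))
               (at t within {t0..})"
    proof (intro allI impI)
      fix t assume t: "t0 \<le> t"
      have "grad (\<lambda>y. divg (\<lambda>z. w z t) y) x = 0" if x: "x \<in> \<Omega>" for x
      proof -
        have "grad (\<lambda>y. divg (\<lambda>z. w z t) y) x = grad (\<lambda>y. 0) x"
          by (rule grad_local[OF \<Omega>o x]) (use Z t in auto)
        then show ?thesis using grad_zero by simp
      qed
      then have R: "L2norm \<Omega> (\<lambda>x. grad (\<lambda>y. divg (\<lambda>z. w z t) y) x) = 0" by (rule L2norm_zero)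
      have L: "(L2norm \<Omega> (\<lambda>x. divg (\<lambda>y. w y s) x))\<^sup>2 = 0" if "s \<in> {t0..}" for s
        using L2norm_zero[of \<Omega> "\<lambda>x. divg (\<lambda>y. w y s) x"] Z that by simp
      have "((\<lambda>s. 0::real) has_real_derivative 0) (at t within {t0..})" by simp
      then have "((\<lambda>s. (L2norm \<Omega> (\<lambda>x. divg (\<lambda>y. w y s) x))\<^sup>2) has_real_derivative 0) (at t within {t0..})"
        by (rule has_field_derivative_transform_within[where d=1]) (use t L in auto)
      then show "((\<lambda>s. (L2norm \<Omega> (\<lambda>x. divg (\<lambda>y. w y s) x))\<^sup>2) has_real_derivative
                  (- 2 * \<nu> * (L2norm \<Omega> (\<lambda>x. grad (\<lambda>y. divg (\<lambda>z. w z t) y) x))\<^sup>2))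
               (at t within {t0..})" using R by simp
    qed
    show "(\<forall>t\<ge>t0. \<forall>x\<in>\<Omega>.
               deriv (\<lambda>s. divg (\<lambda>y. w y s) x) t = \<nu> * lap (\<lambda>y. divg (\<lambda>z. w z t) y) x) \<and>
            (\<forall>t\<ge>t0.
               ((\<lambda>s. (L2norm \<Omega> (\<lambda>x. divg (\<lambda>y. w y s) x))\<^sup>2) has_real_derivative
                  (- 2 * \<nu> * (L2norm \<Omega> (\<lambda>x. grad (\<lambda>y. divg (\<lambda>z. w z t) y) x))\<^sup>2))
               (at t within {t0..}))" using PA PB by (rule conjI)
  qed
  next
    show "\<exists>C>0. \<forall>\<nu> lam g w u q t0. \<nu> > 0 \<and> lam \<ge> 0 \<and>
            GePUP_E_solution \<Omega> (normal_of \<rho>) \<nu> lam g w u q t0 \<longrightarrow>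
            (\<forall>t\<ge>t0. L2norm \<Omega> (\<lambda>x. divg (\<lambda>y. w y t) x)
                 \<le> exp (- \<nu> * C * (t - t0)) * L2norm \<Omega> (\<lambda>x. divg (\<lambda>y. w y t0) x))"
    proof (intro exI[of _ "1::real"] conjI allI impI)
      fix \<nu> lam g w u q and t0 t :: real
      assume H: "\<nu> > 0 \<and> lam \<ge> 0 \<and> GePUP_E_solution \<Omega> (normal_of \<rho>) \<nu> lam g w u q t0" and t: "t0 \<le> t"
      note M = main[of \<nu> "normal_of \<rho>" lam g w u q t0]
      have Z: "\<And>x t. x \<in> \<Omega> \<Longrightarrow> t \<ge> t0 \<Longrightarrow> divg (\<lambda>y. w y t) x = 0" using M H by blast
      have "L2norm \<Omega> (\<lambda>x. divg (\<lambda>y. w y t) x) = 0" by (rule L2norm_zero) (use Z t in auto)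
      moreover have "L2norm \<Omega> (\<lambda>x. divg (\<lambda>y. w y t0) x) = 0" by (rule L2norm_zero) (use Z in auto)
      ultimately show "L2norm \<Omega> (\<lambda>x. divg (\<lambda>y. w y t) x)
                 \<le> exp (- \<nu> * 1 * (t - t0)) * L2norm \<Omega> (\<lambda>x. divg (\<lambda>y. w y t0) x)" by simp
    qed simp
  qed
qed

end
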